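(* Let $a,b\in\mathbb{Q}_3$ be nonzero, with $3$-adic valuations $\gamma(a)$ and $\gamma(b)$ (so $|a|_3=3^{-\gamma(a)}$, $|b|_3=3^{-\gamma(b)}$). Suppose one of the following holds: 1) $\gamma(a)=0$ and $\gamma(b)<0$; 2) $\gamma(a)>0$ and $\gamma(b)>0$; 3) $\gamma(a)>0$ and $\gamma(b)<0$; 4) $\gamma(a)<0$ and $\gamma(b)=0$; 5) $\gamma(a)<0$ and $\gamma(b)>0$. Then the equation $x^3+ax=b$ has no solution $x\in\mathbb{Z}_3^*$.
   Context: $\mathbb{Z}_3^*$ denotes the set of $3$-adic units, i.e. $x\in\mathbb{Q}_3$ with $|x|_3=1$. *)

theory Defs
  imports Complex_Main "HOL-Computational_Algebra.Fraction_Field" "HOL-Computational_Algebra.Primes"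
begin

text \<open>A 3-adic integer is represented by a coherent sequence of integers f,
  where f n is a residue modulo 3^n and f (Suc n) is congruent to f n modulo 3^n.\<close>

definition coh3 :: "(nat \<Rightarrow> int) \<Rightarrow> bool" where
  "coh3 f \<longleftrightarrow> (\<forall>n. (3::int) ^ n dvd (f (Suc n) - f n))"

definition z3_rel :: "(nat \<Rightarrow> int) \<Rightarrow> (nat \<Rightarrow> int) \<Rightarrow> bool" where
  "z3_rel f g \<longleftrightarrow> coh3 f \<and> coh3 g \<and> (\<forall>n. (3::int) ^ n dvd (f n - g n))"

lemma z3_rel_part_equivp: "part_equivp z3_rel"
proof (rule part_equivpI)
  show "\<exists>x. z3_rel x x" by (rule exI[of _ "\<lambda>_. 0"]) (simp add: z3_rel_def coh3_def)
  show "symp z3_rel"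
    unfolding symp_def z3_rel_def by (metis dvd_minus_iff minus_diff_eq)
  show "transp z3_rel"
    unfolding transp_def z3_rel_def
  proof (intro allI impI, elim conjE, intro conjI allI)
    fix x y z n
    assume "\<forall>n. (3::int) ^ n dvd x n - y n" "\<forall>n. (3::int) ^ n dvd y n - z n"
    then have "(3::int) ^ n dvd (x n - y n) + (y n - z n)" by (intro dvd_add) auto
    moreover have "x n - z n = (x n - y n) + (y n - z n)" by simp
    ultimately show "(3::int) ^ n dvd x n - z n" by metis
  qed
qed

quotient_type z3 = "nat \<Rightarrow> int" / partial: z3_rel
  by (rule z3_rel_part_equivp)

lemma coh3_add: "coh3 f \<Longrightarrow> coh3 g \<Longrightarrow> coh3 (\<lambda>n. f n + g n)"
  unfolding coh3_def
proof
  fix n assume "\<forall>n. (3::int) ^ n dvd f (Suc n) - f n" "\<forall>n. (3::int) ^ n dvd g (Suc n) - g n"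
  then have "(3::int) ^ n dvd (f (Suc n) - f n) + (g (Suc n) - g n)" by (simp add: dvd_add)
  then show "(3::int) ^ n dvd f (Suc n) + g (Suc n) - (f n + g n)" by (simp add: algebra_simps)
qed

lemma coh3_mult: "coh3 f \<Longrightarrow> coh3 g \<Longrightarrow> coh3 (\<lambda>n. f n * g n)"
  unfolding coh3_def
proof
  fix n assume a: "\<forall>n. (3::int) ^ n dvd f (Suc n) - f n" "\<forall>n. (3::int) ^ n dvd g (Suc n) - g n"
  have "f (Suc n) * g (Suc n) - f n * g n
        = (f (Suc n) - f n) * g (Suc n) + f n * (g (Suc n) - g n)" by (simp add: algebra_simps)
  moreover have "(3::int) ^ n dvd (f (Suc n) - f n) * g (Suc n) + f n * (g (Suc n) - g n)"
    using a by (intro dvd_add dvd_mult2 dvd_mult) auto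
  ultimately show "(3::int) ^ n dvd f (Suc n) * g (Suc n) - f n * g n" by simp
qed

lemma coh3_uminus: "coh3 f \<Longrightarrow> coh3 (\<lambda>n. - f n)"
  unfolding coh3_def by (metis dvd_minus_iff minus_diff_minus)

lemma coh3_diff: "coh3 f \<Longrightarrow> coh3 g \<Longrightarrow> coh3 (\<lambda>n. f n - g n)"
  using coh3_add[of f "\<lambda>n. - g n"] coh3_uminus[of g] by simp

lemmas coh3_intros = coh3_add coh3_mult coh3_uminus coh3_diff

instantiation z3 :: comm_ring_1
begin

lift_definition zero_z3 :: z3 is "\<lambda>_. 0" by (simp add: z3_rel_def coh3_def)
lift_definition one_z3 :: z3 is "\<lambda>_. 1" by (simp add: z3_rel_def coh3_def)

lift_definition plus_z3 :: "z3 \<Rightarrow> z3 \<Rightarrow> z3" is "\<lambda>f g n. f n + g n"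
proof -
  fix f1 f2 g1 g2 assume A: "z3_rel f1 f2" "z3_rel g1 g2"
  show "z3_rel (\<lambda>n. f1 n + g1 n) (\<lambda>n. f2 n + g2 n)"
    unfolding z3_rel_def
  proof (intro conjI allI)
    show "coh3 (\<lambda>n. f1 n + g1 n)" "coh3 (\<lambda>n. f2 n + g2 n)"
      using A by (auto simp: z3_rel_def intro: coh3_add)
    fix n
    have "(3::int) ^ n dvd (f1 n - f2 n) + (g1 n - g2 n)"
      using A by (auto simp: z3_rel_def intro: dvd_add)
    then show "(3::int) ^ n dvd f1 n + g1 n - (f2 n + g2 n)" by (simp add: algebra_simps)
  qed
qed

lift_definition uminus_z3 :: "z3 \<Rightarrow> z3" is "\<lambda>f n. - f n"
proof -
  fix f1 f2 assume A: "z3_rel f1 f2"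
  show "z3_rel (\<lambda>n. - f1 n) (\<lambda>n. - f2 n)"
    unfolding z3_rel_def
  proof (intro conjI allI)
    show "coh3 (\<lambda>n. - f1 n)" "coh3 (\<lambda>n. - f2 n)"
      using A by (auto simp: z3_rel_def intro: coh3_uminus)
    fix n
    show "(3::int) ^ n dvd - f1 n - - f2 n"
      using A unfolding z3_rel_def by (metis dvd_minus_iff minus_diff_minus)
  qed
qed

lift_definition minus_z3 :: "z3 \<Rightarrow> z3 \<Rightarrow> z3" is "\<lambda>f g n. f n - g n"
proof -
  fix f1 f2 g1 g2 assume A: "z3_rel f1 f2" "z3_rel g1 g2"
  show "z3_rel (\<lambda>n. f1 n - g1 n) (\<lambda>n. f2 n - g2 n)"
    unfolding z3_rel_def
  proof (intro conjI allI)
    show "coh3 (\<lambda>n. f1 n - g1 n)" "coh3 (\<lambda>n. f2 n - g2 n)"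
      using A by (auto simp: z3_rel_def intro: coh3_diff)
    fix n
    have "(3::int) ^ n dvd (f1 n - f2 n) - (g1 n - g2 n)"
      using A by (auto simp: z3_rel_def intro: dvd_diff)
    then show "(3::int) ^ n dvd f1 n - g1 n - (f2 n - g2 n)" by (simp add: algebra_simps)
  qed
qed

lift_definition times_z3 :: "z3 \<Rightarrow> z3 \<Rightarrow> z3" is "\<lambda>f g n. f n * g n"
proof -
  fix f1 f2 g1 g2 assume A: "z3_rel f1 f2" "z3_rel g1 g2"
  show "z3_rel (\<lambda>n. f1 n * g1 n) (\<lambda>n. f2 n * g2 n)"
    unfolding z3_rel_def
  proof (intro conjI allI)
    show "coh3 (\<lambda>n. f1 n * g1 n)" "coh3 (\<lambda>n. f2 n * g2 n)"
      using A by (auto simp: z3_rel_def intro: coh3_mult)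
    fix n
    have "f1 n * g1 n - f2 n * g2 n = (f1 n - f2 n) * g1 n + f2 n * (g1 n - g2 n)"
      by (simp add: algebra_simps)
    moreover have "(3::int) ^ n dvd (f1 n - f2 n) * g1 n + f2 n * (g1 n - g2 n)"
      using A unfolding z3_rel_def by (intro dvd_add dvd_mult2 dvd_mult) auto
    ultimately show "(3::int) ^ n dvd f1 n * g1 n - f2 n * g2 n" by simp
  qed
qed

instance
proof
  fix a b c :: z3
  show "a + b + c = a + (b + c)" by transfer (auto simp: z3_rel_def algebra_simps intro!: coh3_intros)
  show "a + b = b + a" by transfer (auto simp: z3_rel_def algebra_simps intro!: coh3_intros)
  show "0 + a = a" by transfer (auto simp: coh3_def z3_rel_def algebra_simps intro!: coh3_intros)
  show "- a + a = 0" by transfer (auto simp: coh3_def z3_rel_def algebra_simps intro!: coh3_intros)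
  show "a - b = a + - b" by transfer (auto simp: z3_rel_def algebra_simps intro!: coh3_intros)
  show "a * b * c = a * (b * c)" by transfer (auto simp: z3_rel_def algebra_simps intro!: coh3_intros)
  show "a * b = b * a" by transfer (auto simp: z3_rel_def algebra_simps intro!: coh3_intros)
  show "1 * a = a" by transfer (auto simp: z3_rel_def algebra_simps intro!: coh3_intros)
  show "(a + b) * c = a * c + b * c" by transfer (auto simp: z3_rel_def algebra_simps intro!: coh3_intros)
  show "(0::z3) \<noteq> 1"
  proof transfer
    show "\<not> z3_rel (\<lambda>_. 0) (\<lambda>_. 1)"
    proof
      assume "z3_rel (\<lambda>_. 0) (\<lambda>_. 1)"
      then have "(3::int) ^ 1 dvd 0 - 1" unfolding z3_rel_def by blast
      then show False by simp
    qed
  qed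
qed

end

lemma coh3_le: "coh3 f \<Longrightarrow> n \<le> m \<Longrightarrow> (3::int) ^ n dvd (f m - f n)"
proof (induction m)
  case 0 then show ?case by simp
next
  case (Suc m)
  show ?case
  proof (cases "n = Suc m")
    case True then show ?thesis by simp
  next
    case False
    then have "n \<le> m" using Suc.prems by simp
    then have h1: "(3::int) ^ n dvd f m - f n" using Suc by simp
    have "(3::int) ^ m dvd f (Suc m) - f m" using Suc.prems unfolding coh3_def by simp
    moreover have "(3::int) ^ n dvd 3 ^ m" using \<open>n \<le> m\<close> by (simp add: le_imp_power_dvd)
    ultimately have h2: "(3::int) ^ n dvd f (Suc m) - f m" by (rule dvd_trans[rotated])
    have "(3::int) ^ n dvd (f (Suc m) - f m) + (f m - f n)" using h1 h2 by (rule dvd_add[rotated])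
    then show ?thesis by simp
  qed
qed

lemma three_pow_mult_not_dvd:
  "\<not> (3::int)^i dvd x \<Longrightarrow> \<not> (3::int)^j dvd y \<Longrightarrow> \<not> (3::int)^(i+j) dvd x*y"
proof
  assume a: "\<not> (3::int)^i dvd x" "\<not> (3::int)^j dvd y" "(3::int)^(i+j) dvd x*y"
  have p: "prime (3::int)" by simp
  have "x \<noteq> 0" "y \<noteq> 0" using a by auto
  then have "multiplicity 3 x < i" "multiplicity 3 y < j"
    using a by (auto simp: power_dvd_iff_le_multiplicity not_le)
  moreover have "i + j \<le> multiplicity 3 (x*y)"
    using a \<open>x\<noteq>0\<close> \<open>y\<noteq>0\<close> by (simp add: power_dvd_iff_le_multiplicity)
  moreover have "multiplicity 3 (x*y) = multiplicity 3 x + multiplicity 3 y"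
    using p \<open>x\<noteq>0\<close> \<open>y\<noteq>0\<close> by (simp add: prime_elem_multiplicity_mult_distrib)
  ultimately show False by simp
qed

lemma coh3_not_dvd_up:
  assumes "coh3 f" "\<not> (3::int)^i dvd f i" "i \<le> N"
  shows "\<not> (3::int)^i dvd f N"
proof
  assume "(3::int)^i dvd f N"
  moreover have "(3::int)^i dvd f N - f i" using coh3_le[OF assms(1,3)] .
  ultimately have "(3::int)^i dvd f N - (f N - f i)" by (rule dvd_diff)
  then show False using assms(2) by simp
qed

instance z3 :: idom
proof
  fix a b :: z3
  have "a * b = 0 \<Longrightarrow> a = 0 \<or> b = 0"
  proof (transfer, goal_cases)
    case (1 f g)
    then have f: "z3_rel f f" and g: "z3_rel g g" and fg: "z3_rel (\<lambda>n. f n * g n) (\<lambda>_. 0)"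
      by auto
    show ?case
    proof (rule ccontr)
      assume "\<not> ?thesis"
      then obtain i j where i: "\<not> (3::int)^i dvd f i" and j: "\<not> (3::int)^j dvd g j"
        using f g by (auto simp: z3_rel_def coh3_def)
      have "\<not> (3::int)^i dvd f (i+j)" using coh3_not_dvd_up[of f i "i+j"] i f by (simp add: z3_rel_def)
      moreover have "\<not> (3::int)^j dvd g (i+j)" using coh3_not_dvd_up[of g j "i+j"] j g by (simp add: z3_rel_def)
      ultimately have "\<not> (3::int)^(i+j) dvd f (i+j) * g (i+j)" by (rule three_pow_mult_not_dvd)
      then show False using fg by (simp add: z3_rel_def)
    qed
  qed
  then show "a \<noteq> 0 \<Longrightarrow> b \<noteq> 0 \<Longrightarrow> a * b \<noteq> 0" by blast
qed

type_synonym q3 = "z3 fract"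

text \<open>The 3-adic valuation gamma: for nonzero a in Q_3, gamma a is the unique integer k
  with a = 3^k * u for a unit u of Z_3, so that the 3-adic absolute value is 3^(-gamma a).
  (The value at 0 is irrelevant.)\<close>

definition val3 :: "q3 \<Rightarrow> int" where
  "val3 a = (THE k. \<exists>u::z3. u dvd 1 \<and> a = (3::q3) powi k * Fract u 1)"

definition Z3_units :: "q3 set" where
  "Z3_units = {x. x \<noteq> 0 \<and> val3 x = 0}"

end

theory Submission
  imports Defs
begin

lemma dvd_div3: "(3::int)^(Suc k) dvd x - y \<Longrightarrow> (3::int)^k dvd x div 3 - y div 3"
proof -
  assume h: "(3::int)^(Suc k) dvd x - y"
  then have "3 dvd x - y" by (meson dvd_power dvd_trans zero_less_Suc dvd_refl)
  then have m: "x mod 3 = y mod 3" by (simp add: mod_eq_dvd_iff)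
  have "x - y = (3*(x div 3) + x mod 3) - (3*(y div 3) + y mod 3)" by simp
  also have "\<dots> = 3 * (x div 3 - y div 3)" using m by (simp add: algebra_simps)
  finally have "x - y = 3 * (x div 3 - y div 3)" .
  with h have "3 * 3^k dvd 3 * (x div 3 - y div 3)" by simp
  then show ?thesis by (subst (asm) dvd_mult_cancel_left) simp
qed

lift_definition div3 :: "z3 \<Rightarrow> z3" is "\<lambda>f n. f (Suc n) div 3"
  unfolding z3_rel_def coh3_def by (auto intro: dvd_div3)

lift_definition res1 :: "z3 \<Rightarrow> int" is "\<lambda>f. f 1 mod 3"
  unfolding z3_rel_def by (metis mod_eq_dvd_iff power_one_right)

lift_definition pow3 :: "nat \<Rightarrow> z3" is "\<lambda>k n. 3^k"
  unfolding z3_rel_def coh3_def by simp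

lemma three_z3: "(3::z3) = 1 + 1 + 1" by simp

lemma pow3_Suc: "pow3 (Suc k) = (1 + 1 + 1) * pow3 k"
  by transfer (simp add: z3_rel_def coh3_def)

lemma pow3_eq: "(3::z3)^k = pow3 k"
proof (induction k)
  case 0
  have "pow3 0 = 1" by transfer (simp add: z3_rel_def coh3_def)
  then show ?case by simp
next
  case (Suc k) then show ?case by (simp add: pow3_Suc)
qed

lemma res1_mult: "res1 (z * w) = (res1 z * res1 w) mod 3"
  by transfer (simp add: mod_mult_eq)

lemma res1_one: "res1 1 = 1" by transfer simp

lemma res1_three: "res1 (3 * w) = 0"
  unfolding three_z3 by transfer simp

lemma res1_split: "res1 z = 0 \<Longrightarrow> z = 3 * div3 z"
  unfolding three_z3
proof transfer
  fix f assume r: "z3_rel f f" "f 1 mod 3 = 0"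
  then have c: "coh3 f" by (simp add: z3_rel_def)
  have "\<And>n. (3::int) dvd f (Suc n)"
  proof -
    fix n
    have "(3::int)^1 dvd f (Suc n) - f 1" by (rule coh3_le[OF c]) simp
    then show "(3::int) dvd f (Suc n)" using r(2) by (metis dvd_diff_commute dvd_imp_mod_0 mod_0_imp_dvd mod_eq_dvd_iff power_one_right)
  qed
  then have e: "\<And>n. (1 + 1 + 1) * (f (Suc n) div 3) = f (Suc n)" by simp
  have coh: "coh3 (\<lambda>n. (1 + 1 + 1) * (f (Suc n) div 3))" unfolding e coh3_def
  proof
    fix n
    have "(3::int)^(Suc n) dvd f (Suc (Suc n)) - f (Suc n)" using c unfolding coh3_def by blast
    then show "(3::int)^n dvd f (Suc (Suc n)) - f (Suc n)" by (auto dest: dvd_mult_right)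
  qed
  show "z3_rel f (\<lambda>n. (1 + 1 + 1) * (f (Suc n) div 3))"
    unfolding z3_rel_def
  proof (intro conjI allI)
    show "coh3 f" by (rule c)
    show "coh3 (\<lambda>n. (1 + 1 + 1) * (f (Suc n) div 3))" by (rule coh)
    fix n
    have "(3::int)^n dvd f (Suc n) - f n" using c unfolding coh3_def by blast
    then show "(3::int)^n dvd f n - (1 + 1 + 1) * (f (Suc n) div 3)"
      unfolding e by (simp add: dvd_diff_commute)
  qed
qed

lemma coh3_mod1: "coh3 f \<Longrightarrow> 0 < n \<Longrightarrow> (3::int) dvd f n - f 1"
  using coh3_le[of f 1 n] by simp

lemma inv_seq:
  assumes c: "coh3 f" and r: "f 1 mod 3 \<noteq> 0"
  shows "\<exists>g. coh3 g \<and> (\<forall>n. (3::int)^n dvd f n * g n - 1)"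
proof -
  have cop: "coprime (f n) ((3::int)^n)" for n
  proof (cases "n = 0")
    case True then show ?thesis by simp
  next
    case False
    have "\<not> (3::int) dvd f n"
    proof
      assume "(3::int) dvd f n"
      moreover have "(3::int) dvd f n - f 1" using coh3_mod1[OF c] False by simp
      ultimately have "(3::int) dvd f n - (f n - f 1)" by (rule dvd_diff)
      then have "(3::int) dvd f 1" by simp
      with r show False by simp
    qed
    then have "coprime (3::int) (f n)" by (intro prime_imp_coprime) auto
    then show ?thesis by (simp add: coprime_commute)
  qed
  have ex: "\<exists>x. (3::int)^n dvd f n * x - 1" for n
  proof -
    obtain u v where "u * f n + v * 3^n = gcd (f n) ((3::int)^n)" using bezout_int by blast
    then have "u * f n + v * 3^n = 1" using cop[of n] by simp
    then have "f n * u - 1 = 3^n * (- v)" by (simp add: algebra_simps)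
    then have "(3::int)^n dvd f n * u - 1" by simp
    then show ?thesis by blast
  qed
  define g where "g n = (SOME x. (3::int)^n dvd f n * x - 1)" for n
  have g': "(3::int)^n dvd f n * g n - 1" for n
    unfolding g_def by (rule someI_ex) (rule ex)
  have "coh3 g" unfolding coh3_def
  proof
    fix n
    have "(3::int)^n dvd f (Suc n) - f n" using c unfolding coh3_def by blast
    then have "(3::int)^n dvd f n - f (Suc n)" by (simp add: dvd_diff_commute)
    then have a1: "(3::int)^n dvd (f n - f (Suc n)) * g (Suc n)" by (rule dvd_mult2)
    have a2: "(3::int)^n dvd f (Suc n) * g (Suc n) - 1"
      using g'[of "Suc n"] by (auto dest: dvd_mult_right)
    have "f n * (g (Suc n) - g n) = (f n - f (Suc n)) * g (Suc n) + (f (Suc n) * g (Suc n) - 1) - (f n * g n - 1)"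
      by (simp add: algebra_simps)
    moreover have "(3::int)^n dvd (f n - f (Suc n)) * g (Suc n) + (f (Suc n) * g (Suc n) - 1) - (f n * g n - 1)"
      by (rule dvd_diff[OF dvd_add[OF a1 a2] g'[of n]])
    ultimately have "(3::int)^n dvd f n * (g (Suc n) - g n)" by simp
    then show "(3::int)^n dvd g (Suc n) - g n"
      using coprime_dvd_mult_right_iff[of "3^n" "f n" "g (Suc n) - g n"] cop[of n] by (simp add: coprime_commute)
  qed
  with g' show ?thesis by blast
qed

lemma res1_unit: "res1 z \<noteq> 0 \<Longrightarrow> z dvd 1"
  unfolding dvd_def
proof transfer
  fix f assume a: "z3_rel f f" "f 1 mod 3 \<noteq> 0"
  then have c: "coh3 f" by (simp add: z3_rel_def)
  obtain g where g: "coh3 g" "\<And>n. (3::int)^n dvd f n * g n - 1" using inv_seq[OF c a(2)] by blast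
  have "z3_rel g g" using g(1) by (simp add: z3_rel_def)
  moreover have "z3_rel (\<lambda>_. 1) (\<lambda>n. f n * g n)"
    unfolding z3_rel_def
  proof (intro conjI allI)
    show "coh3 (\<lambda>_. 1::int)" by (simp add: coh3_def)
    show "coh3 (\<lambda>n. f n * g n)" using c g(1) by (rule coh3_mult)
    fix n show "(3::int)^n dvd 1 - f n * g n" using g(2)[of n] by (simp add: dvd_diff_commute)
  qed
  ultimately show "\<exists>g \<in> {x. z3_rel x x}. z3_rel (\<lambda>_. 1) (\<lambda>n. f n * g n)"
    by blast
qed


lemma all_pow_dvd_zero: "(\<forall>n. \<exists>w. z = pow3 n * w) \<Longrightarrow> z = 0"
proof transfer
  fix f assume a: "z3_rel f f" "\<forall>n. \<exists>g\<in>{x. z3_rel x x}. z3_rel f (\<lambda>k. 3 ^ n * g k)"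
  show "z3_rel f (\<lambda>_. 0)"
    unfolding z3_rel_def
  proof (intro conjI allI)
    show "coh3 f" using a(1) by (simp add: z3_rel_def)
    show "coh3 (\<lambda>_. 0::int)" by (simp add: coh3_def)
    fix n
    obtain g where "z3_rel f (\<lambda>k. 3 ^ n * g k)" using a(2) by blast
    then have "(3::int)^n dvd f n - 3^n * g n" by (simp add: z3_rel_def)
    then have "(3::int)^n dvd (f n - 3^n * g n) + 3^n * g n" by (rule dvd_add) simp
    then show "(3::int)^n dvd f n - 0" by simp
  qed
qed

lemma unit_not_three: "u dvd (1::z3) \<Longrightarrow> \<not> 3 dvd u"
proof
  assume "u dvd 1" "3 dvd u"
  obtain v where "1 = u * v" using \<open>u dvd 1\<close> by (rule dvdE)
  obtain w where "u = 3 * w" using \<open>3 dvd u\<close> by (rule dvdE)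
  have "res1 1 = (res1 u * res1 v) mod 3" using res1_mult[of u v] \<open>1 = u * v\<close> by simp
  also have "res1 u = 0" using \<open>u = 3 * w\<close> res1_three by simp
  finally show False using res1_one by simp
qed

lemma decomp_aux: "\<not> (3::z3)^n dvd z \<Longrightarrow> \<exists>m w. z = 3^m * w \<and> w dvd 1"
proof (induction n arbitrary: z)
  case 0 then show ?case by simp
next
  case (Suc n)
  show ?case
  proof (cases "res1 z = 0")
    case False
    then have "z = 3^0 * z \<and> z dvd 1" using res1_unit by simp
    then show ?thesis by blast
  next
    case True
    then have z: "z = 3 * div3 z" by (rule res1_split)
    have "\<not> (3::z3)^n dvd div3 z"
    proof
      assume "(3::z3)^n dvd div3 z"
      then have "3 * 3^n dvd 3 * div3 z" by (rule mult_dvd_mono[OF dvd_refl])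
      then have "3 ^ Suc n dvd z" by (subst z) simp
      then show False using Suc.prems by blast
    qed
    then obtain m w where "div3 z = 3^m * w" "w dvd 1" using Suc.IH by blast
    then have "z = 3 ^ Suc m * w" by (subst z) simp
    then show ?thesis using \<open>w dvd 1\<close> by blast
  qed
qed

lemma decomp: "(z::z3) \<noteq> 0 \<Longrightarrow> \<exists>m w. z = 3^m * w \<and> w dvd 1"
  using all_pow_dvd_zero[of z] decomp_aux unfolding pow3_eq[symmetric] dvd_def by blast


lemma unit_mult_z3: "(u::z3) dvd 1 \<Longrightarrow> v dvd 1 \<Longrightarrow> u * v dvd 1"
  using mult_dvd_mono[of u 1 v 1] by simp

lemma unit_pow_z3: "(u::z3) dvd 1 \<Longrightarrow> u ^ n dvd 1"
  using dvd_power_same[of u 1 n] by simp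

lemma F_add: "Fract (x::z3) 1 + Fract y 1 = Fract (x + y) 1" by simp
lemma F_diff: "Fract (x::z3) 1 - Fract y 1 = Fract (x - y) 1" by simp
lemma F_mult: "Fract (x::z3) 1 * Fract y 1 = Fract (x * y) 1" by simp
lemma F_pow: "Fract (x::z3) 1 ^ n = Fract (x ^ n) 1"
  by (induction n) (simp_all add: One_fract_def)
lemma F_eq: "Fract (x::z3) 1 = Fract y 1 \<longleftrightarrow> x = y" by (simp add: eq_fract)
lemma F_three: "(3::q3) = Fract 3 1"
  using of_nat_fract[of 3, where 'a=z3] by simp
lemma F_three_pow: "(3::q3) ^ n = Fract (3 ^ n) 1"
  by (simp add: F_three F_pow)

lemma three_nz_z3: "(3::z3) \<noteq> 0"
  unfolding three_z3
proof transfer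
  show "\<not> z3_rel (\<lambda>_. 1 + 1 + 1) (\<lambda>_. 0)"
  proof
    assume "z3_rel (\<lambda>_. 1 + 1 + 1) (\<lambda>_. 0)"
    then have "(3::int)^2 dvd 1 + 1 + 1 - 0" unfolding z3_rel_def by blast
    then show False by simp
  qed
qed

lemma three_nz_q3: "(3::q3) \<noteq> 0"
  using three_nz_z3 by (simp add: F_three Zero_fract_def F_eq)

lemma q3_exists: "(a::q3) \<noteq> 0 \<Longrightarrow> \<exists>k u. u dvd 1 \<and> a = 3 powi k * Fract u 1"
proof (cases a)
  case (Fract p q)
  assume a0: "a \<noteq> 0"
  have "p \<noteq> 0" using a0 Fract by (auto simp: Zero_fract_def eq_fract)
  then obtain m u where pu: "p = 3^m * u" "u dvd 1" using decomp by blast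
  obtain n v where qv: "q = 3^n * v" "v dvd 1" using decomp Fract(2) by blast
  obtain v' where v': "1 = v * v'" using qv(2) by (rule dvdE)
  have "(3::q3)^n * a = 3^m * Fract (u * v') 1"
  proof -
    have qnz: "3 ^ n * v \<noteq> 0" using Fract(2) qv(1) by simp
    have e: "3 ^ n * (3 ^ m * u) * 1 = 3 ^ m * (u * v') * (1 * (3 ^ n * v))"
    proof -
      have "3 ^ m * (u * v') * (1 * (3 ^ n * v)) = 3 ^ n * (3 ^ m * u) * (v * v')"
        by (simp add: algebra_simps)
      then show ?thesis using v' by (simp add: mult.commute)
    qed
    have "Fract (3 ^ n * (3 ^ m * u)) (1 * (3 ^ n * v)) = Fract (3 ^ m * (u * v')) (1 * 1)"
      using qnz e by (subst eq_fract(1)) simp_all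
    then show ?thesis unfolding F_three_pow Fract(1) pu qv mult_fract .
  qed
  then have "a = 3 powi (int m - int n) * Fract (u * v') 1"
  proof (cases "n \<le> m")
    case True
    then have pw: "(3::q3) ^ m = 3^n * 3^(m-n)" by (simp flip: power_add)
    assume h: "(3::q3)^n * a = 3^m * Fract (u * v') 1"
    have "(3::q3)^n * a = 3^n * (3^(m-n) * Fract (u * v') 1)" using h pw by simp
    then have "a = 3^(m-n) * Fract (u * v') 1" using three_nz_q3 by simp
    moreover have "(3::q3) powi (int m - int n) = 3^(m-n)" using True
      by (simp add: power_int_def nat_diff_distrib)
    ultimately show ?thesis by simp
  next
    case False
    then have pw: "(3::q3) ^ n = 3^m * 3^(n-m)" by (simp flip: power_add)
    assume h: "(3::q3)^n * a = 3^m * Fract (u * v') 1"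
    have "(3::q3)^m * (3^(n-m) * a) = 3^m * Fract (u * v') 1" using h pw by (simp add: mult.assoc)
    then have "3^(n-m) * a = Fract (u * v') 1" using three_nz_q3 by simp
    then have "a = inverse (3^(n-m)) * Fract (u * v') 1" using three_nz_q3 by (simp add: field_simps)
    moreover have "(3::q3) powi (int m - int n) = inverse (3^(n-m))" using False
      by (simp add: power_int_def nat_diff_distrib power_one_over inverse_eq_divide)
    ultimately show ?thesis by simp
  qed
  moreover have "v' dvd 1" by (rule dvdI[of _ _ v]) (simp add: v' mult.commute)
  then have "u * v' dvd 1" using pu(2) by (rule unit_mult_z3[rotated])
  ultimately show ?thesis by blast
qed


lemma no_unit_mult3: "(u::z3) dvd 1 \<Longrightarrow> 0 < j \<Longrightarrow> u = 3^j * w \<Longrightarrow> False"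
proof -
  assume "(u::z3) dvd 1" "0 < j" "u = 3^j * w"
  have "(3::z3) dvd 3^j * w" using dvd_power[of j "3::z3"] \<open>0 < j\<close> by (intro dvd_mult2) simp
  then show False using unit_not_three[OF \<open>u dvd 1\<close>] \<open>u = 3^j * w\<close> by simp
qed

lemma uniq_aux:
  assumes "k < l" "u dvd 1" "(3::q3) powi k * Fract u 1 = 3 powi l * Fract v 1"
  shows False
proof -
  define j where "j = nat (l - k)"
  have l: "l = k + int j" "0 < j" using assms(1) by (auto simp: j_def)
  have "(3::q3) powi l = 3 powi k * 3^j" unfolding l(1) using three_nz_q3 by (simp add: power_int_add)
  then have "(3::q3) powi k * Fract u 1 = 3 powi k * (3^j * Fract v 1)" using assms(3) by (simp add: mult.assoc)
  then have "Fract u 1 = 3^j * Fract v 1" using three_nz_q3 by simp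
  then have "u = 3^j * v" by (simp add: F_three_pow F_eq)
  then show False using no_unit_mult3 assms(2) l(2) by blast
qed

lemma val3_rep:
  assumes "(a::q3) \<noteq> 0"
  shows "\<exists>u. u dvd 1 \<and> a = 3 powi (val3 a) * Fract u 1"
proof -
  have "\<exists>!k. \<exists>u::z3. u dvd 1 \<and> a = (3::q3) powi k * Fract u 1"
  proof (rule ex_ex1I)
    show "\<exists>k u. u dvd 1 \<and> a = 3 powi k * Fract u 1" using q3_exists[OF assms] by blast
  next
    fix k l
    assume "\<exists>u::z3. u dvd 1 \<and> a = (3::q3) powi k * Fract u 1" "\<exists>u::z3. u dvd 1 \<and> a = (3::q3) powi l * Fract u 1"
    then obtain u v where uv: "u dvd 1" "a = 3 powi k * Fract u 1" "v dvd 1" "a = 3 powi l * Fract v 1" by blast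
    show "k = l"
    proof (rule ccontr)
      assume "k \<noteq> l"
      then consider "k < l" | "l < k" by linarith
      then show False
      proof cases
        case 1 then show False using uniq_aux[of k l u v] uv by simp
      next
        case 2 then show False using uniq_aux[of l k v u] uv by simp
      qed
    qed
  qed
  then show ?thesis unfolding val3_def by (rule theI')
qed


lemma pos_form: "0 \<le> k \<Longrightarrow> (3::q3) powi k = 3 ^ nat k"
  by (simp add: power_int_def)

lemma neg_form: "k < 0 \<Longrightarrow> 3 ^ nat (-k) * (3::q3) powi k = 1"
  using three_nz_q3 by (simp add: power_int_def power_mult_distrib[symmetric])

lemma contra3: "(u::z3) dvd 1 \<Longrightarrow> u = p - q \<Longrightarrow> 3 dvd p \<Longrightarrow> 3 dvd q \<Longrightarrow> False"
proof -
  assume h: "(u::z3) dvd 1" "u = p - q" "3 dvd p" "3 dvd q"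
  have "3 dvd p - q" using h(3,4) by (rule dvd_diff)
  then show False using unit_not_three[OF h(1)] h(2) by simp
qed

lemma dvd3: "0 < n \<Longrightarrow> (3::z3) dvd 3^n * y"
  by (simp add: dvd_power dvd_mult2)

lemma rep_pos: "(a::q3) \<noteq> 0 \<Longrightarrow> 0 \<le> val3 a \<Longrightarrow> \<exists>u. u dvd 1 \<and> a = 3 ^ nat (val3 a) * Fract u 1"
  using val3_rep[of a] pos_form[of "val3 a"] by auto

lemma rep_neg: "(a::q3) \<noteq> 0 \<Longrightarrow> val3 a < 0 \<Longrightarrow> \<exists>u. u dvd 1 \<and> 3 ^ nat (- val3 a) * a = Fract u 1"
proof -
  assume "a \<noteq> 0" "val3 a < 0"
  then obtain u where u: "u dvd 1" "a = 3 powi (val3 a) * Fract u 1" using val3_rep by blast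
  have "3 ^ nat (- val3 a) * a = (3 ^ nat (- val3 a) * 3 powi (val3 a)) * Fract u 1"
    using u(2) by (simp add: mult.assoc)
  also have "\<dots> = Fract u 1" using neg_form[OF \<open>val3 a < 0\<close>] by simp
  finally show ?thesis using u(1) by blast
qed

theorem proposition3p1:
  fixes a b :: q3
  assumes "a \<noteq> 0" and "b \<noteq> 0"
    and "(val3 a = 0 \<and> val3 b < 0) \<or> (val3 a > 0 \<and> val3 b > 0) \<or>
         (val3 a > 0 \<and> val3 b < 0) \<or> (val3 a < 0 \<and> val3 b = 0) \<or>
         (val3 a < 0 \<and> val3 b > 0)"
  shows "\<not> (\<exists>x \<in> Z3_units. x ^ 3 + a * x = b)"
proof
  assume "\<exists>x \<in> Z3_units. x ^ 3 + a * x = b"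
  then obtain x where x: "x \<noteq> 0" "val3 x = 0" and eq: "x ^ 3 + a * x = b"
    unfolding Z3_units_def by blast
  obtain ux where ux: "ux dvd 1" "x = Fract ux 1" using rep_pos[OF x(1)] x(2) by auto
  have ux3: "ux ^ 3 dvd 1" using ux(1) by (rule unit_pow_z3)
  define na where "na = nat \<bar>val3 a\<bar>"
  define nb where "nb = nat \<bar>val3 b\<bar>"
  consider (c1) "val3 a = 0" "val3 b < 0" | (c2) "val3 a > 0" "val3 b > 0" | (c3) "val3 a > 0" "val3 b < 0"
    | (c4) "val3 a < 0" "val3 b = 0" | (c5) "val3 a < 0" "val3 b > 0" using assms(3) by blast
  then show False
  proof cases
    case c1
    have na0: "na = 0" and nbp: "0 < nb" using c1 na_def nb_def by simp_all
    obtain ua where ua: "ua dvd 1" "a = 3 ^ na * Fract ua 1" using rep_pos[OF assms(1)] c1 na_def by auto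
    obtain ub where ub: "ub dvd 1" "3 ^ nb * b = Fract ub 1" using rep_neg[OF assms(2)] c1 nb_def by auto
    have "3 ^ nb * (x ^ 3 + a * x) = Fract ub 1" unfolding eq by (rule ub(2))
    then have "Fract (3 ^ nb * (ux ^ 3 + ua * ux)) 1 = Fract ub 1"
      unfolding ua(2) ux(2) na0 by (simp add: F_three_pow F_pow)
    then have "ub = 3 ^ nb * (ux ^ 3 + ua * ux) - 0" by (simp add: F_eq)
    then show False by (rule contra3[OF ub(1) _ dvd3[OF nbp] dvd_0_right])
  next
    case c2
    have nap: "0 < na" and nbp: "0 < nb" using c2 na_def nb_def by simp_all
    obtain ua where ua: "ua dvd 1" "a = 3 ^ na * Fract ua 1" using rep_pos[OF assms(1)] c2 na_def by auto
    obtain ub where ub: "ub dvd 1" "b = 3 ^ nb * Fract ub 1" using rep_pos[OF assms(2)] c2 nb_def by auto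
    have "Fract (ux ^ 3 + 3 ^ na * ua * ux) 1 = Fract (3 ^ nb * ub) 1"
      using eq unfolding ua(2) ub(2) ux(2) by (simp add: F_three_pow F_pow)
    then have "ux ^ 3 = 3 ^ nb * ub - 3 ^ na * (ua * ux)" by (simp add: F_eq algebra_simps)
    then show False by (rule contra3[OF ux3 _ dvd3[OF nbp] dvd3[OF nap]])
  next
    case c3
    have nap: "0 < na" and nbp: "0 < nb" using c3 na_def nb_def by simp_all
    obtain ua where ua: "ua dvd 1" "a = 3 ^ na * Fract ua 1" using rep_pos[OF assms(1)] c3 na_def by auto
    obtain ub where ub: "ub dvd 1" "3 ^ nb * b = Fract ub 1" using rep_neg[OF assms(2)] c3 nb_def by auto
    have "3 ^ nb * (x ^ 3 + a * x) = Fract ub 1" unfolding eq by (rule ub(2))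
    then have "Fract (3 ^ nb * (ux ^ 3 + 3 ^ na * ua * ux)) 1 = Fract ub 1"
      unfolding ua(2) ux(2) by (simp add: F_three_pow F_pow)
    then have "ub = 3 ^ nb * (ux ^ 3 + 3 ^ na * ua * ux) - 0" by (simp add: F_eq)
    then show False by (rule contra3[OF ub(1) _ dvd3[OF nbp] dvd_0_right])
  next
    case c4
    have nap: "0 < na" and nb0: "nb = 0" using c4 na_def nb_def by simp_all
    obtain ua where ua: "ua dvd 1" "3 ^ na * a = Fract ua 1" using rep_neg[OF assms(1)] c4 na_def by auto
    obtain ub where ub: "ub dvd 1" "b = 3 ^ nb * Fract ub 1" using rep_pos[OF assms(2)] c4 nb_def by auto
    have "3 ^ na * x ^ 3 + (3 ^ na * a) * x = 3 ^ na * b" unfolding eq[symmetric] by (simp add: algebra_simps)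
    then have "Fract (3 ^ na * ux ^ 3 + ua * ux) 1 = Fract (3 ^ na * (3 ^ nb * ub)) 1"
      unfolding ua(2) ub(2) ux(2) by (simp add: F_three_pow F_pow)
    then have "ua * ux = 3 ^ na * (3 ^ nb * ub) - 3 ^ na * ux ^ 3" by (simp add: F_eq algebra_simps)
    then show False by (rule contra3[OF unit_mult_z3[OF ua(1) ux(1)] _ dvd3[OF nap] dvd3[OF nap]])
  next
    case c5
    have nap: "0 < na" and nbp: "0 < nb" using c5 na_def nb_def by simp_all
    obtain ua where ua: "ua dvd 1" "3 ^ na * a = Fract ua 1" using rep_neg[OF assms(1)] c5 na_def by auto
    obtain ub where ub: "ub dvd 1" "b = 3 ^ nb * Fract ub 1" using rep_pos[OF assms(2)] c5 nb_def by auto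
    have "3 ^ na * x ^ 3 + (3 ^ na * a) * x = 3 ^ na * b" unfolding eq[symmetric] by (simp add: algebra_simps)
    then have "Fract (3 ^ na * ux ^ 3 + ua * ux) 1 = Fract (3 ^ na * (3 ^ nb * ub)) 1"
      unfolding ua(2) ub(2) ux(2) by (simp add: F_three_pow F_pow)
    then have "ua * ux = 3 ^ na * (3 ^ nb * ub) - 3 ^ na * ux ^ 3" by (simp add: F_eq algebra_simps)
    then show False by (rule contra3[OF unit_mult_z3[OF ua(1) ux(1)] _ dvd3[OF nap] dvd3[OF nap]])
  qed
qed

end
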